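(* Let $\mathcal T\subset\binom{[n]}{3}$ be an intersecting family with $\tau(\mathcal T)=3$. Then $\gamma_1(\mathcal T)\leq 5$, with equality if and only if $\mathcal T$ is isomorphic to $\mathcal T_0$.
   Context: A family is intersecting if any two members intersect. $\tau(\mathcal T)$ is the minimum size of a set meeting every member of $\mathcal T$. $\gamma_1(\mathcal T)=\min_{x\in[n]}|\{T\in\mathcal T: x\notin T\}|$. $\mathcal T_0\subset\binom{[6]}{3}$ is $\{\{1,2,3\},\{1,2,4\},\{3,4,5\},\{3,4,6\},\{1,5,6\},\{2,5,6\},\{1,3,5\},\{2,4,5\},\{1,4,6\},\{2,3,6\}\}$. Isomorphic means equal up to an injective relabeling of vertices. *)

theory Defs
  imports Main
begin

definition intersecting :: "'a set set \<Rightarrow> bool" where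
  "intersecting F \<longleftrightarrow> (\<forall>A\<in>F. \<forall>B\<in>F. A \<inter> B \<noteq> {})"

definition tau :: "'a set set \<Rightarrow> nat" where
  "tau F = (LEAST k. \<exists>S. finite S \<and> card S = k \<and> (\<forall>A\<in>F. S \<inter> A \<noteq> {}))"

definition gamma1 :: "nat \<Rightarrow> nat set set \<Rightarrow> nat" where
  "gamma1 n F = Min ((\<lambda>x. card {A\<in>F. x \<notin> A}) ` {1..n})"

definition T0 :: "nat set set" where
  "T0 = {{1,2,3},{1,2,4},{3,4,5},{3,4,6},{1,5,6},{2,5,6},{1,3,5},{2,4,5},{1,4,6},{2,3,6}}"

definition isomorphic :: "'a set set \<Rightarrow> 'b set set \<Rightarrow> bool" where
  "isomorphic F G \<longleftrightarrow> (\<exists>f. inj_on f (\<Union>F) \<and> (\<lambda>A. f ` A) ` F = G)"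

end

theory Submission
  imports Defs
begin

definition G :: "nat set set \<Rightarrow> nat \<Rightarrow> nat set \<Rightarrow> nat set set" where
  "G T u E = {e. insert u e \<in> T \<and> e \<inter> E = {}}"
definition P :: "nat set set \<Rightarrow> nat \<Rightarrow> nat set \<Rightarrow> nat set" where
  "P T u E = {w. insert w (E - {u}) \<in> T \<and> w \<notin> E}"
definition M :: "nat set set \<Rightarrow> nat \<Rightarrow> nat set set" where
  "M T v = {A\<in>T. v \<notin> A}"
definition fam :: "nat set set \<Rightarrow> bool" where
  "fam T \<longleftrightarrow> finite T \<and> (\<forall>A\<in>T. card A = 3) \<and> (\<forall>A\<in>T. \<forall>B\<in>T. A \<inter> B \<noteq> {})
      \<and> (\<forall>x y. \<exists>A\<in>T. x \<notin> A \<and> y \<notin> A)"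

locale fe =
  fixes T :: "nat set set" and E :: "nat set" and a b c :: nat
  assumes famT: "fam T" and EinT: "E \<in> T" and Eabc: "E = {a,b,c}"
    and ab: "a \<noteq> b" and ac: "a \<noteq> c" and bc: "b \<noteq> c"
begin

lemma finT: "finite T" using famT by (simp add: fam_def)
lemma card3: "A \<in> T \<Longrightarrow> card A = 3" using famT by (simp add: fam_def)
lemma finA: "A \<in> T \<Longrightarrow> finite A" using card3 by (metis card.infinite zero_neq_numeral)
lemma inter: "A \<in> T \<Longrightarrow> B \<in> T \<Longrightarrow> A \<inter> B \<noteq> {}" using famT by (simp add: fam_def)
lemma cov: "\<exists>A\<in>T. x \<notin> A \<and> y \<notin> A" using famT by (simp add: fam_def)

lemma GT: "e \<in> G T u E \<Longrightarrow> insert u e \<in> T" by (simp add: G_def)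
lemma GE: "e \<in> G T u E \<Longrightarrow> e \<inter> E = {}" by (simp add: G_def)
lemma PT: "w \<in> P T u E \<Longrightarrow> insert w (E - {u}) \<in> T" by (simp add: P_def)
lemma PE: "w \<in> P T u E \<Longrightarrow> w \<notin> E" by (simp add: P_def)

lemma Gcard: assumes "u \<in> E" "e \<in> G T u E" shows "card e = 2" "finite e"
proof -
  have "u \<notin> e" using assms(1) GE[OF assms(2)] by auto
  have f: "finite (insert u e)" by (rule finA[OF GT[OF assms(2)]])
  then show "finite e" by simp
  have "card (insert u e) = 3" by (rule card3[OF GT[OF assms(2)]])
  then show "card e = 2" using \<open>u \<notin> e\<close> \<open>finite e\<close> by simp
qed

lemma finU: "finite (\<Union>T)" by (rule finite_Union[OF finT finA])
lemma Gfin: "finite (G T u E)"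
proof -
  have "G T u E \<subseteq> Pow (\<Union>T)" using GT by blast
  then show ?thesis using finU finite_subset by blast
qed
lemma Pfin: "finite (P T u E)"
proof -
  have "P T u E \<subseteq> \<Union>T" using PT by blast
  then show ?thesis using finU finite_subset by blast
qed

lemma Ea: "E - {a} = {b,c}" using Eabc ab ac bc by auto
lemma Eb: "E - {b} = {a,c}" using Eabc ab ac bc by auto
lemma Ec: "E - {c} = {a,b}" using Eabc ab ac bc by auto

lemma card_eq3: assumes "{x,y,z} \<subseteq> F" "card F = 3" "x\<noteq>y" "x\<noteq>z" "y\<noteq>z" "finite F"
  shows "F = {x,y,z}"
proof -
  have "card {x,y,z} = 3" using assms by simp
  then show ?thesis using assms card_subset_eq by metis
qed

lemma third: assumes "card F = 3" shows "F - {x,y} \<noteq> {}"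
proof
  assume "F - {x,y} = {}"
  then have "F \<subseteq> {x,y}" by blast
  then have "card F \<le> card {x,y}" by (simp add: card_mono)
  also have "\<dots> \<le> 2" by (simp add: card_insert_if)
  finally show False using assms by simp
qed

lemma decomp: assumes F: "F \<in> T"
  shows "F = E \<or> (\<exists>e\<in>G T a E. F = insert a e) \<or> (\<exists>e\<in>G T b E. F = insert b e)
   \<or> (\<exists>e\<in>G T c E. F = insert c e) \<or> (\<exists>w\<in>P T a E. F = {w,b,c})
   \<or> (\<exists>w\<in>P T b E. F = {w,a,c}) \<or> (\<exists>w\<in>P T c E. F = {w,a,b})"
proof -
  have ne: "F \<inter> E \<noteq> {}" by (rule inter[OF F EinT])
  have c3: "card F = 3" by (rule card3[OF F])
  have fF: "finite F" by (rule finA[OF F])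
  consider "a \<in> F" "b \<in> F" "c \<in> F" | "a \<in> F" "b \<in> F" "c \<notin> F" | "a \<in> F" "b \<notin> F" "c \<in> F"
    | "a \<notin> F" "b \<in> F" "c \<in> F" | "a \<in> F" "b \<notin> F" "c \<notin> F" | "a \<notin> F" "b \<in> F" "c \<notin> F"
    | "a \<notin> F" "b \<notin> F" "c \<in> F" | "a \<notin> F" "b \<notin> F" "c \<notin> F" by blast
  then show ?thesis
  proof cases
    case 1
    then have "F = {a,b,c}" using card_eq3[of a b c F] c3 fF ab ac bc by auto
    then show ?thesis using Eabc by simp
  next
    case 2
    have "F - {a,b} \<noteq> {}" using third[OF c3] by blast
    then obtain w where w: "w \<in> F" "w \<noteq> a" "w \<noteq> b" by blast
    then have "F = {a,b,w}" using card_eq3[of a b w F] c3 fF ab 2 by auto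
    moreover have "w \<notin> E" using w 2 Eabc \<open>F = {a,b,w}\<close> by auto
    moreover have FF: "{w,a,b} = F" using \<open>F = {a,b,w}\<close> by auto
    ultimately have "w \<in> P T c E" using F Ec unfolding P_def by simp
    then show ?thesis using FF by blast
  next
    case 3
    have "F - {a,c} \<noteq> {}" using third[OF c3] by blast
    then obtain w where w: "w \<in> F" "w \<noteq> a" "w \<noteq> c" by blast
    then have "F = {a,c,w}" using card_eq3[of a c w F] c3 fF ac 3 by auto
    moreover have "w \<notin> E" using w 3 Eabc \<open>F = {a,c,w}\<close> by auto
    moreover have FF: "{w,a,c} = F" using \<open>F = {a,c,w}\<close> by auto
    ultimately have "w \<in> P T b E" using F Eb unfolding P_def by simp
    then show ?thesis using FF by blast
  next
    case 4
    have "F - {b,c} \<noteq> {}" using third[OF c3] by blast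
    then obtain w where w: "w \<in> F" "w \<noteq> b" "w \<noteq> c" by blast
    then have "F = {b,c,w}" using card_eq3[of b c w F] c3 fF bc 4 by auto
    moreover have "w \<notin> E" using w 4 Eabc \<open>F = {b,c,w}\<close> by auto
    moreover have FF: "{w,b,c} = F" using \<open>F = {b,c,w}\<close> by auto
    ultimately have "w \<in> P T a E" using F Ea unfolding P_def by simp
    then show ?thesis using FF by blast
  next
    case 5
    have i: "insert a (F - {a}) = F" using 5 by blast
    have "(F - {a}) \<inter> E = {}" using 5 Eabc by blast
    then have "F - {a} \<in> G T a E" using i F unfolding G_def by simp
    then show ?thesis using i by metis
  next
    case 6
    have i: "insert b (F - {b}) = F" using 6 by blast
    have "(F - {b}) \<inter> E = {}" using 6 Eabc by blast
    then have "F - {b} \<in> G T b E" using i F unfolding G_def by simp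
    then show ?thesis using i by metis
  next
    case 7
    have i: "insert c (F - {c}) = F" using 7 by blast
    have "(F - {c}) \<inter> E = {}" using 7 Eabc by blast
    then have "F - {c} \<in> G T c E" using i F unfolding G_def by simp
    then show ?thesis using i by metis
  next
    case 8 then show ?thesis using ne Eabc by auto
  qed
qed


lemma aE: "a \<in> E" and bE: "b \<in> E" and cE: "c \<in> E" using Eabc by auto

lemma M_a: "card (M T a) \<le> card (G T b E) + card (G T c E) + card (P T a E)"
proof -
  have "M T a \<subseteq> (insert b ` G T b E \<union> insert c ` G T c E) \<union> (\<lambda>w. {w,b,c}) ` P T a E"
  proof
    fix F assume "F \<in> M T a"
    then have F: "F \<in> T" "a \<notin> F" by (auto simp: M_def)
    from decomp[OF F(1)] F(2) aE show "F \<in> (insert b ` G T b E \<union> insert c ` G T c E) \<union> (\<lambda>w. {w,b,c}) ` P T a E"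
      by auto
  qed
  then have "card (M T a) \<le> card ((insert b ` G T b E \<union> insert c ` G T c E) \<union> (\<lambda>w. {w,b,c}) ` P T a E)"
    by (intro card_mono) (auto intro: Gfin Pfin)
  also have "\<dots> \<le> card (insert b ` G T b E \<union> insert c ` G T c E) + card ((\<lambda>w. {w,b,c}) ` P T a E)"
    by (rule card_Un_le)
  also have "\<dots> \<le> card (insert b ` G T b E) + card (insert c ` G T c E) + card ((\<lambda>w. {w,b,c}) ` P T a E)"
    using card_Un_le by simp
  also have "\<dots> \<le> card (G T b E) + card (G T c E) + card (P T a E)"
    by (intro add_mono card_image_le Gfin Pfin)
  finally show ?thesis .
qed

lemma G_ne: "G T a E \<noteq> {}"
proof -
  obtain A where A: "A \<in> T" "b \<notin> A" "c \<notin> A" using cov by blast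
  from decomp[OF A(1)] A(2,3) bE cE show ?thesis by auto
qed

lemma cross: assumes "e \<in> G T a E" "f \<in> G T b E" shows "e \<inter> f \<noteq> {}"
proof -
  have "insert a e \<inter> insert b f \<noteq> {}" by (rule inter[OF GT[OF assms(1)] GT[OF assms(2)]])
  moreover have "a \<notin> f" "b \<notin> e" using GE[OF assms(1)] GE[OF assms(2)] aE bE by blast+
  ultimately show ?thesis using ab by auto
qed

lemma Pin: assumes "w \<in> P T a E" "e \<in> G T a E" shows "w \<in> e"
proof -
  have "insert w (E - {a}) \<inter> insert a e \<noteq> {}" by (rule inter[OF PT[OF assms(1)] GT[OF assms(2)]])
  moreover have "b \<notin> e" "c \<notin> e" "w \<notin> E" using GE[OF assms(2)] PE[OF assms(1)] bE cE by blast+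
  ultimately show ?thesis using Ea ab ac aE by auto
qed

lemma taup: assumes "p \<notin> E"
  shows "(\<exists>e\<in>G T b E. p \<notin> e) \<or> (\<exists>e\<in>G T c E. p \<notin> e) \<or> (\<exists>w\<in>P T a E. w \<noteq> p)"
proof -
  obtain A where A: "A \<in> T" "a \<notin> A" "p \<notin> A" using cov by blast
  from decomp[OF A(1)] A(2,3) aE show ?thesis by auto
qed

end

lemma fe_perm: assumes "fe T E a b c"
  shows "fe T E b a c" "fe T E c b a" "fe T E a c b" "fe T E b c a" "fe T E c a b"
proof -
  have h: "fam T" "E \<in> T" "E = {a,b,c}" "a \<noteq> b" "a \<noteq> c" "b \<noteq> c" using assms unfolding fe_def by auto
  have e: "E = {b,a,c}" "E = {c,b,a}" "E = {a,c,b}" "E = {b,c,a}" "E = {c,a,b}" using h(3) by blast+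
  show "fe T E b a c" "fe T E c b a" "fe T E a c b" "fe T E b c a" "fe T E c a b"
    unfolding fe_def using h e by auto
qed


lemma count_pair: assumes "finite K" "X \<subseteq> K" "Y \<subseteq> K" "inj_on h K" "h ` K \<subseteq> K"
  "\<forall>x\<in>X. h x \<notin> Y" shows "card X + card Y \<le> card K"
proof -
  have "card X = card (h ` X)" using assms by (metis card_image inj_on_subset)
  moreover have "h ` X \<inter> Y = {}" using assms by blast
  moreover have "h ` X \<union> Y \<subseteq> K" using assms by blast
  moreover have "finite (h ` X)" "finite Y" using assms finite_subset by blast+
  ultimately have "card (h ` X \<union> Y) = card (h ` X) + card Y" by (simp add: card_Un_disjoint)
  moreover have "card (h ` X \<union> Y) \<le> card K" using \<open>h ` X \<union> Y \<subseteq> K\<close> assms(1) by (simp add: card_mono)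
  ultimately show ?thesis using \<open>card X = card (h ` X)\<close> by simp
qed

lemma two: assumes "card e = 2" "x \<in> e" shows "\<exists>y. e = {x,y} \<and> y \<noteq> x"
proof -
  obtain u v where uv: "e = {u,v}" "u \<noteq> v" using assms(1) card_2_iff by metis
  show ?thesis
  proof (cases "x = u")
    case True then show ?thesis using uv by blast
  next
    case False then have "x = v" using uv assms(2) by blast
    then show ?thesis using uv by blast
  qed
qed
lemma graph3: assumes "card e1 = 2" "card e2 = 2" "card e3 = 2" "e1 \<noteq> e2" "e1 \<noteq> e3" "e2 \<noteq> e3"
  "e1 \<inter> e2 \<noteq> {}" "e1 \<inter> e3 \<noteq> {}" "e2 \<inter> e3 \<noteq> {}"
  shows "(\<exists>p. p \<in> e1 \<and> p \<in> e2 \<and> p \<in> e3) \<or>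
         (\<exists>p q r. p \<noteq> q \<and> q \<noteq> r \<and> p \<noteq> r \<and> {{p,q},{q,r},{p,r}} = {e1,e2,e3})"
proof -
  obtain q where q: "q \<in> e1" "q \<in> e2" using assms(7) by blast
  obtain p where p: "e1 = {q,p}" "p \<noteq> q" using two[OF assms(1) q(1)] by blast
  obtain r where r: "e2 = {q,r}" "r \<noteq> q" using two[OF assms(2) q(2)] by blast
  have pr: "p \<noteq> r" using p r assms(4) by auto
  show ?thesis
  proof (cases "q \<in> e3")
    case True then show ?thesis using q by blast
  next
    case False
    then have "p \<in> e3" "r \<in> e3" using assms(8,9) p r by auto
    then obtain z where z: "e3 = {p,z}" "z \<noteq> p" using two[OF assms(3)] by blast
    then have e3: "e3 = {p,r}" using \<open>r \<in> e3\<close> pr by auto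
    have "{{p,q},{q,r},{p,r}} = {e1,e2,e3}" unfolding e3 p(1) r(1) by blast
    then show ?thesis using p r pr by blast
  qed
qed

lemma card_ins: "finite S \<Longrightarrow> card (insert x S) \<le> Suc (card S)" by (simp add: card_insert_if)
lemma card4: "card {A,B,C,D} \<le> (4::nat)"
  using card_ins[of "{B,C,D}" A] card_ins[of "{C,D}" B] card_ins[of "{D}" C] by simp
lemma card3': "card {A,B,C} \<le> (3::nat)"
  using card_ins[of "{B,C}" A] card_ins[of "{C}" B] by simp

context fe begin
lemma no_star: assumes "e1 \<in> G T a E" "e2 \<in> G T a E" "e3 \<in> G T a E"
  "e1 \<noteq> e2" "e1 \<noteq> e3" "e2 \<noteq> e3" "p \<in> e1" "p \<in> e2" "p \<in> e3"
  shows False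
proof -
  interpret acb: fe T E a c b using fe_perm(3) fe_axioms by blast
  have "card e1 = 2" "card e2 = 2" "card e3 = 2" using Gcard(1)[OF aE assms(1)] Gcard(1)[OF aE assms(2)] Gcard(1)[OF aE assms(3)] by auto
  then obtain q1 q2 q3 where q: "e1 = {p,q1}" "e2 = {p,q2}" "e3 = {p,q3}" "q1\<noteq>p" "q2\<noteq>p" "q3\<noteq>p"
    using two[of e1 p] two[of e2 p] two[of e3 p] assms(7-9) by blast
  have qd: "q1 \<noteq> q2" "q1 \<noteq> q3" "q2 \<noteq> q3" using q assms(4-6) by auto
  have key: "p \<in> g" if "card g = 2" "g \<inter> e1 \<noteq> {}" "g \<inter> e2 \<noteq> {}" "g \<inter> e3 \<noteq> {}" for g
  proof (rule ccontr)
    assume "p \<notin> g"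
    then have "{q1,q2,q3} \<subseteq> g" using that q by auto
    moreover have "finite g" using that by (metis card.infinite zero_neq_numeral)
    ultimately have "card {q1,q2,q3} \<le> card g" by (simp add: card_mono)
    then show False using qd that by simp
  qed
  have pE: "p \<notin> E" using GE[OF assms(1)] assms(7) by blast
  have gb: "\<forall>g\<in>G T b E. p \<in> g"
  proof
    fix g assume g: "g \<in> G T b E"
    show "p \<in> g" using key[OF Gcard(1)[OF bE g]] cross[OF assms(1) g] cross[OF assms(2) g] cross[OF assms(3) g]
      by (simp add: Int_commute)
  qed
  have gc: "\<forall>g\<in>G T c E. p \<in> g"
  proof
    fix g assume g: "g \<in> G T c E"
    show "p \<in> g" using key[OF Gcard(1)[OF cE g]] acb.cross[OF assms(1) g] acb.cross[OF assms(2) g] acb.cross[OF assms(3) g]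
      by (simp add: Int_commute)
  qed
  have pa: "\<forall>w\<in>P T a E. w = p"
  proof
    fix w assume w: "w \<in> P T a E"
    have "w \<in> e1" "w \<in> e2" using Pin[OF w assms(1)] Pin[OF w assms(2)] by auto
    then show "w = p" using q qd by auto
  qed
  from taup[OF pE] gb gc pa show False by blast
qed
end

locale fe5 = fe +
  assumes big: "\<forall>v\<in>\<Union>T. 5 \<le> card (M T v)"
begin

lemma no_disj: assumes e: "e \<in> G T a E" and f: "f \<in> G T a E" and ef: "e \<inter> f = {}"
  shows False
proof -
  interpret acb: fe T E a c b using fe_perm(3) fe_axioms by blast
  interpret bca: fe T E b c a using fe_perm(4) fe_axioms by blast
  obtain p q where pq: "e = {p,q}" "p \<noteq> q" using Gcard(1)[OF aE e] card_2_iff by metis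
  obtain r s where rs: "f = {r,s}" "r \<noteq> s" using Gcard(1)[OF aE f] card_2_iff by metis
  have d: "p \<noteq> r" "p \<noteq> s" "q \<noteq> r" "q \<noteq> s" using ef pq rs by auto
  define K where "K = {{p,r},{p,s},{q,r},{q,s}}"
  define U where "U = {p,q,r,s}"
  have inK: "g \<in> K" if c2: "card g = 2" and m1: "g \<inter> e \<noteq> {}" and m2: "g \<inter> f \<noteq> {}" for g
  proof -
    obtain u where u: "u \<in> g" "u \<in> e" using m1 by blast
    obtain v where v: "v \<in> g" "v \<in> f" using m2 by blast
    have uv: "u \<noteq> v" using u v ef by blast
    obtain z where z: "g = {u,z}" using two[OF c2 u(1)] by blast
    then have g: "g = {u,v}" using v(1) uv by blast
    have "u = p \<or> u = q" "v = r \<or> v = s" using u v pq rs by auto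
    then show ?thesis unfolding g K_def by auto
  qed
  have Gb: "G T b E \<subseteq> K"
  proof
    fix g assume g: "g \<in> G T b E"
    show "g \<in> K" using inK[OF Gcard(1)[OF bE g]] cross[OF e g] cross[OF f g] by (simp add: Int_commute)
  qed
  have Gc: "G T c E \<subseteq> K"
  proof
    fix g assume g: "g \<in> G T c E"
    show "g \<in> K" using inK[OF Gcard(1)[OF cE g]] acb.cross[OF e g] acb.cross[OF f g] by (simp add: Int_commute)
  qed
  have hK: "(\<lambda>g. U - g) ` K \<subseteq> K"
  proof -
    have "{p,q,r,s} - {p,r} = {q,s}" "{p,q,r,s} - {p,s} = {q,r}" "{p,q,r,s} - {q,r} = {p,s}" "{p,q,r,s} - {q,s} = {p,r}"
      using d pq rs by auto
    then show ?thesis unfolding K_def U_def by auto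
  qed
  have ih: "inj_on (\<lambda>g. U - g) K"
  proof (rule inj_onI)
    fix x y assume "x \<in> K" "y \<in> K" "U - x = U - y"
    moreover have "x \<subseteq> U" "y \<subseteq> U" using \<open>x \<in> K\<close> \<open>y \<in> K\<close> unfolding K_def U_def by auto
    ultimately show "x = y" by blast
  qed
  have disj: "\<forall>g\<in>G T b E. U - g \<notin> G T c E"
  proof
    fix g assume g: "g \<in> G T b E"
    show "U - g \<notin> G T c E"
    proof
      assume "U - g \<in> G T c E"
      from bca.cross[OF g this] show False by blast
    qed
  qed
  have cK: "card K \<le> 4" unfolding K_def by (rule card4)
  have "card (G T b E) + card (G T c E) \<le> card K"
    by (rule count_pair[OF _ Gb Gc ih hK disj]) (simp add: K_def)
  moreover have "P T a E = {}"
  proof (rule ccontr)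
    assume "P T a E \<noteq> {}"
    then obtain w where "w \<in> P T a E" by blast
    then have "w \<in> e" "w \<in> f" using Pin[OF _ e] Pin[OF _ f] by auto
    then show False using ef by blast
  qed
  moreover have "a \<in> \<Union>T" using aE EinT by blast
  ultimately show False using big M_a cK by fastforce
qed


lemma triD: assumes "card g = 2" "g \<inter> {p,q} \<noteq> {}" "g \<inter> {q,r} \<noteq> {}" "g \<inter> {p,r} \<noteq> {}"
  "p \<noteq> q" "q \<noteq> r" "p \<noteq> r" shows "g \<in> {{p,q},{q,r},{p,r}}"
proof (cases "q \<in> g")
  case True
  then obtain z where z: "g = {q,z}" "z \<noteq> q" using two[OF assms(1)] by blast
  then have "z = p \<or> z = r" using assms(4-7) by auto
  then show ?thesis using z by auto
next
  case False
  then have "p \<in> g" "r \<in> g" using assms(2,3) by auto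
  then obtain z where z: "g = {p,z}" using two[OF assms(1)] by blast
  then have "g = {p,r}" using \<open>r \<in> g\<close> assms(7) by auto
  then show ?thesis by simp
qed

lemma tri2: assumes D: "D = {{p,q},{q,r},{p,r}}" and d: "p \<noteq> q" "q \<noteq> r" "p \<noteq> r"
  and Gb: "G T b E = D" and Ga: "{p,q} \<in> G T a E" "{q,r} \<in> G T a E" "{p,r} \<in> G T a E"
  and Gc: "G T c E \<subseteq> D" "{p,q} \<in> G T c E" "{q,r} \<in> G T c E"
  shows False
proof -
  interpret bac: fe T E b a c using fe_perm(1) fe_axioms by blast
  interpret cab: fe T E c a b using fe_perm(5) fe_axioms by blast
  have GaD: "G T a E \<subseteq> D"
  proof
    fix g assume g: "g \<in> G T a E"
    have m: "g \<inter> h \<noteq> {}" if "h \<in> D" for h using bac.cross[of h g] that Gb g by (auto simp: Int_commute)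
    show "g \<in> D" unfolding D using triD[OF Gcard(1)[OF aE g] m m m d] D by auto
  qed
  have Pa: "P T a E = {}"
  proof (rule ccontr)
    assume "P T a E \<noteq> {}" then obtain w where w: "w \<in> P T a E" by blast
    have "w \<in> {p,q}" "w \<in> {q,r}" "w \<in> {p,r}" using Pin[OF w] Ga by auto
    then show False using d by auto
  qed
  have Pb: "P T b E = {}"
  proof (rule ccontr)
    assume "P T b E \<noteq> {}" then obtain w where w: "w \<in> P T b E" by blast
    have "w \<in> {p,q}" "w \<in> {q,r}" "w \<in> {p,r}" using bac.Pin[OF w] Gb D by auto
    then show False using d by auto
  qed
  have Pc: "P T c E \<subseteq> {q}"
  proof
    fix w assume w: "w \<in> P T c E"
    have "w \<in> {p,q}" "w \<in> {q,r}" using cab.Pin[OF w] Gc by auto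
    then show "w \<in> {q}" using d by auto
  qed
  have sub: "M T q \<subseteq> {E, {a,p,r}, {b,p,r}, {c,p,r}}"
  proof
    fix F assume "F \<in> M T q"
    then have F: "F \<in> T" "q \<notin> F" by (auto simp: M_def)
    have ee: "e = {p,r}" if "e \<in> D" "q \<notin> e" for e using that D by auto
    from decomp[OF F(1)] show "F \<in> {E, {a,p,r}, {b,p,r}, {c,p,r}}"
    proof (elim disjE bexE)
      assume "F = E" then show ?thesis by simp
    next
      fix e assume "e \<in> G T a E" "F = insert a e"
      then show ?thesis using ee[of e] GaD F(2) by auto
    next
      fix e assume "e \<in> G T b E" "F = insert b e"
      then show ?thesis using ee[of e] Gb F(2) by auto
    next
      fix e assume "e \<in> G T c E" "F = insert c e"
      then show ?thesis using ee[of e] Gc F(2) by auto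
    next
      fix w assume "w \<in> P T a E" then show ?thesis using Pa by simp
    next
      fix w assume "w \<in> P T b E" then show ?thesis using Pb by simp
    next
      fix w assume "w \<in> P T c E" "F = {w,a,b}" then show ?thesis using Pc F(2) by auto
    qed
  qed
  have "card (M T q) \<le> 4" using card_mono[OF _ sub] card4 by (meson finite.emptyI finite.insertI order_trans)
  moreover have "q \<in> \<Union>T" using GT[OF Ga(1)] by blast
  ultimately show False using big by fastforce
qed

lemma tri3: assumes D: "D = {{p,q},{q,r},{p,r}}" and d: "p \<noteq> q" "q \<noteq> r" "p \<noteq> r"
  and Gb: "G T b E = D" and Ga: "{p,q} \<in> G T a E" "{q,r} \<in> G T a E" "{p,r} \<in> G T a E"
  and Gc: "G T c E \<subseteq> D" "2 \<le> card (G T c E)"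
  shows False
proof -
  have e1: "{q,p} = {p,q}" "{r,p} = {p,r}" "{r,q} = {q,r}" by blast+
  consider "{p,q} \<in> G T c E" "{q,r} \<in> G T c E" | "{p,q} \<in> G T c E" "{p,r} \<in> G T c E"
    | "{q,r} \<in> G T c E" "{p,r} \<in> G T c E"
    | "G T c E \<subseteq> {{p,q}}" | "G T c E \<subseteq> {{q,r}}" | "G T c E \<subseteq> {{p,r}}"
    using Gc(1) D by blast
  then show False
  proof cases
    case 1 then show False using tri2[OF D d Gb Ga Gc(1)] by blast
  next
    case 2
    have D2: "D = {{q,p},{p,r},{q,r}}" using D by blast
    show False using tri2[OF D2 _ _ _ Gb] 2 Ga Gc(1) d unfolding e1 by blast
  next
    case 3
    have D2: "D = {{q,r},{r,p},{q,p}}" using D by blast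
    show False using tri2[OF D2 _ _ _ Gb] 3 Ga Gc(1) d unfolding e1 by blast
  next
    case 4 then have "card (G T c E) \<le> 1" using card_mono[of "{{p,q}}"] by fastforce
    then show False using Gc(2) by simp
  next
    case 5 then have "card (G T c E) \<le> 1" using card_mono[of "{{q,r}}"] by fastforce
    then show False using Gc(2) by simp
  next
    case 6 then have "card (G T c E) \<le> 1" using card_mono[of "{{p,r}}"] by fastforce
    then show False using Gc(2) by simp
  qed
qed


lemma perm5: "fe5 T E b a c" "fe5 T E c b a" "fe5 T E a c b" "fe5 T E b c a" "fe5 T E c a b"
proof -
  have ax: "fe5_axioms T" using big by (simp add: fe5_axioms_def)
  show "fe5 T E b a c" "fe5 T E c b a" "fe5 T E a c b" "fe5 T E b c a" "fe5 T E c a b"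
    using fe5.intro[OF fe_perm(1)[OF fe_axioms] ax] fe5.intro[OF fe_perm(2)[OF fe_axioms] ax]
     fe5.intro[OF fe_perm(3)[OF fe_axioms] ax] fe5.intro[OF fe_perm(4)[OF fe_axioms] ax]
     fe5.intro[OF fe_perm(5)[OF fe_axioms] ax] by auto
qed

lemma no_tri: assumes d: "p \<noteq> q" "q \<noteq> r" "p \<noteq> r"
  and Ga: "{p,q} \<in> G T a E" "{q,r} \<in> G T a E" "{p,r} \<in> G T a E"
  shows False
proof -
  interpret acb: fe5 T E a c b by (rule perm5(3))
  define D where "D = {{p,q},{q,r},{p,r}}"
  have cD: "card D \<le> 3" unfolding D_def by (rule card3')
  have fD: "finite D" unfolding D_def by simp
  have GbD: "G T b E \<subseteq> D"
  proof
    fix g assume g: "g \<in> G T b E"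
    have m: "g \<inter> h \<noteq> {}" if "h \<in> G T a E" for h using cross[of h g] that g by (auto simp: Int_commute)
    show "g \<in> D" unfolding D_def using triD[OF Gcard(1)[OF bE g] m m m d] Ga by auto
  qed
  have GcD: "G T c E \<subseteq> D"
  proof
    fix g assume g: "g \<in> G T c E"
    have m: "g \<inter> h \<noteq> {}" if "h \<in> G T a E" for h using acb.cross[of h g] that g by (auto simp: Int_commute)
    show "g \<in> D" unfolding D_def using triD[OF Gcard(1)[OF cE g] m m m d] Ga by auto
  qed
  have Pa: "P T a E = {}"
  proof (rule ccontr)
    assume "P T a E \<noteq> {}" then obtain w where w: "w \<in> P T a E" by blast
    have "w \<in> {p,q}" "w \<in> {q,r}" "w \<in> {p,r}" using Pin[OF w] Ga by auto
    then show False using d by auto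
  qed
  have "a \<in> \<Union>T" using aE EinT by blast
  then have "5 \<le> card (M T a)" using big by blast
  then have "5 \<le> card (G T b E) + card (G T c E)" using M_a Pa by simp
  moreover have "card (G T b E) \<le> card D" "card (G T c E) \<le> card D" using card_mono[OF fD GbD] card_mono[OF fD GcD] by auto
  ultimately consider "card (G T b E) = card D" "2 \<le> card (G T c E)"
    | "card (G T c E) = card D" "2 \<le> card (G T b E)" using cD by linarith
  then show False
  proof cases
    case 1
    then have "G T b E = D" using card_subset_eq[OF fD GbD] by blast
    then show False using tri3[OF D_def d _ Ga GcD 1(2)] by blast
  next
    case 2
    then have "G T c E = D" using card_subset_eq[OF fD GcD] by blast
    then show False using acb.tri3[OF D_def d _ Ga GbD 2(2)] by blast
  qed
qed

lemma three: assumes "3 \<le> card S"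
  shows "\<exists>x y z. x \<in> S \<and> y \<in> S \<and> z \<in> S \<and> x \<noteq> y \<and> x \<noteq> z \<and> y \<noteq> z"
proof -
  obtain S' where "S' \<subseteq> S" "card S' = 3" using obtain_subset_with_card_n[OF assms] by metis
  then show ?thesis using card_3_iff[of S'] by blast
qed

lemma G_le2: "card (G T a E) \<le> 2"
proof (rule ccontr)
  assume "\<not> card (G T a E) \<le> 2"
  then have "3 \<le> card (G T a E)" by linarith
  then obtain e1 e2 e3 where e: "e1 \<in> G T a E" "e2 \<in> G T a E" "e3 \<in> G T a E" "e1 \<noteq> e2" "e1 \<noteq> e3" "e2 \<noteq> e3"
    using three[of "G T a E"] by blast
  have i: "e1 \<inter> e2 \<noteq> {}" "e1 \<inter> e3 \<noteq> {}" "e2 \<inter> e3 \<noteq> {}"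
    using no_disj[OF e(1) e(2)] no_disj[OF e(1) e(3)] no_disj[OF e(2) e(3)] by blast+
  from graph3[OF Gcard(1)[OF aE e(1)] Gcard(1)[OF aE e(2)] Gcard(1)[OF aE e(3)] e(4-6) i]
  show False
  proof
    assume "\<exists>p. p \<in> e1 \<and> p \<in> e2 \<and> p \<in> e3"
    then show False using no_star[OF e] by blast
  next
    assume "\<exists>p q r. p \<noteq> q \<and> q \<noteq> r \<and> p \<noteq> r \<and> {{p, q}, {q, r}, {p, r}} = {e1, e2, e3}"
    then obtain p q r where pqr: "p \<noteq> q" "q \<noteq> r" "p \<noteq> r" "{{p, q}, {q, r}, {p, r}} = {e1, e2, e3}" by blast
    have sub: "{e1,e2,e3} \<subseteq> G T a E" using e(1-3) by simp
    have "{{p,q},{q,r},{p,r}} \<subseteq> G T a E" unfolding pqr(4) by (rule sub)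
    then have "{p,q} \<in> G T a E" "{q,r} \<in> G T a E" "{p,r} \<in> G T a E" by simp_all
    then show False using no_tri[OF pqr(1-3)] by blast
  qed
qed


lemma G_ge1: "1 \<le> card (G T a E)"
  using G_ne Gfin by (simp add: Suc_le_eq card_gt_0_iff)

lemma Pb: "card (P T a E) + card (G T a E) \<le> 3"
proof -
  obtain e where e: "e \<in> G T a E" using G_ne by blast
  have sub: "P T a E \<subseteq> e" using Pin[OF _ e] by blast
  have "card (P T a E) \<le> 2" using card_mono[OF Gcard(2)[OF aE e] sub] Gcard(1)[OF aE e] by simp
  moreover have "card (P T a E) \<le> 1" if c2: "card (G T a E) = 2"
  proof -
    obtain e1 e2 where ee: "G T a E = {e1,e2}" "e1 \<noteq> e2" using c2 card_2_iff by metis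
    have s: "P T a E \<subseteq> e1 \<inter> e2" using Pin[of _ e1] Pin[of _ e2] ee(1) by blast
    have "\<forall>x\<in>P T a E. \<forall>y\<in>P T a E. x = y"
    proof (intro ballI, rule ccontr)
      fix x y assume xy: "x \<in> P T a E" "y \<in> P T a E" "x \<noteq> y"
      have c1: "card e1 = 2" "card e2 = 2" using Gcard(1)[OF aE] ee(1) by auto
      obtain z1 where z1: "e1 = {x,z1}" using two[OF c1(1), of x] s xy by blast
      obtain z2 where z2: "e2 = {x,z2}" using two[OF c1(2), of x] s xy by blast
      have "e1 = {x,y}" using z1 s xy by auto
      moreover have "e2 = {x,y}" using z2 s xy by auto
      ultimately show False using ee(2) by simp
    qed
    then have "card (P T a E) \<le> Suc 0" by (subst card_le_Suc0_iff_eq[OF Pfin])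
    then show ?thesis by simp
  qed
  moreover have "card (G T a E) \<le> 2" "1 \<le> card (G T a E)" by (rule G_le2, rule G_ge1)
  ultimately show ?thesis by (cases "card (G T a E) = 2") auto
qed

lemma cherry_form: assumes "card (G T a E) = 2" "P T a E = {w}"
  shows "\<exists>r1 r2. G T a E = {{w,r1},{w,r2}} \<and> r1 \<noteq> r2 \<and> r1 \<noteq> w \<and> r2 \<noteq> w"
proof -
  obtain e1 e2 where ee: "G T a E = {e1,e2}" "e1 \<noteq> e2" using assms(1) card_2_iff by metis
  have c1: "card e1 = 2" "card e2 = 2" using Gcard(1)[OF aE] ee(1) by auto
  have "w \<in> e1" "w \<in> e2" using Pin[of w e1] Pin[of w e2] assms(2) ee(1) by auto
  then obtain r1 r2 where "e1 = {w,r1}" "r1 \<noteq> w" "e2 = {w,r2}" "r2 \<noteq> w" using two[OF c1(1)] two[OF c1(2)] by metis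
  then show ?thesis using ee by auto
qed

lemma same_center: assumes "P T a E = {w}" "P T c E = {w}" "\<forall>e\<in>G T a E. w \<in> e" "\<forall>e\<in>G T c E. w \<in> e"
  "card (G T b E) = 2" "card (P T b E) = 1" shows False
proof -
  have sub: "M T w \<subseteq> {E} \<union> insert b ` G T b E \<union> (\<lambda>x. {x,a,c}) ` P T b E"
  proof
    fix F assume "F \<in> M T w"
    then have F: "F \<in> T" "w \<notin> F" by (auto simp: M_def)
    from decomp[OF F(1)] show "F \<in> {E} \<union> insert b ` G T b E \<union> (\<lambda>x. {x,a,c}) ` P T b E"
      using assms(1-4) F(2) by auto
  qed
  have "card (M T w) \<le> card ({E} \<union> insert b ` G T b E \<union> (\<lambda>x. {x,a,c}) ` P T b E)"
    using card_mono[OF _ sub] Gfin Pfin by simp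
  also have "\<dots> \<le> card ({E} \<union> insert b ` G T b E) + card ((\<lambda>x. {x,a,c}) ` P T b E)" by (rule card_Un_le)
  also have "\<dots> \<le> card {E} + card (insert b ` G T b E) + card ((\<lambda>x. {x,a,c}) ` P T b E)" using card_Un_le[of "{E}" "insert b ` G T b E"] by simp
  also have "\<dots> \<le> 1 + card (G T b E) + card (P T b E)" using card_image_le[OF Gfin, of "insert b" b] card_image_le[OF Pfin, of "\<lambda>x. {x,a,c}" b] by simp
  finally have "card (M T w) \<le> 4" using assms(5,6) by simp
  moreover obtain e where "e \<in> G T a E" using G_ne by blast
  then have "w \<in> \<Union>T" using assms(3) GT[of e a] by blast
  ultimately show False using big by fastforce
qed

lemma cherry: assumes "wa \<noteq> wc" "r1 \<noteq> r2" "s1 \<noteq> s2"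
  "{wa,r1} \<inter> {wc,s1} \<noteq> {}" "{wa,r1} \<inter> {wc,s2} \<noteq> {}" "{wa,r2} \<inter> {wc,s1} \<noteq> {}" "{wa,r2} \<inter> {wc,s2} \<noteq> {}"
  shows "wc = r1 \<or> wc = r2"
proof (rule ccontr)
  assume n: "\<not> (wc = r1 \<or> wc = r2)"
  have "wa = s1 \<or> r1 = s1" "wa = s2 \<or> r1 = s2" "wa = s1 \<or> r2 = s1" "wa = s2 \<or> r2 = s2"
    using assms(4-7) assms(1) n by blast+
  then show False using assms(2,3) by blast
qed


lemma leaves: assumes P: "P T a E = {wa}" "P T b E = {wb}" "P T c E = {wc}"
  and d: "wa \<noteq> wb" "wa \<noteq> wc" "wb \<noteq> wc"
  and cG: "card (G T a E) = 2" "card (G T b E) = 2" "card (G T c E) = 2"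
  shows "G T a E = {{wa,wb},{wa,wc}}"
proof -
  interpret acb: fe T E a c b using fe_perm(3) fe_axioms by blast
  interpret bac: fe5 T E b a c by (rule perm5(1))
  interpret cab: fe5 T E c a b by (rule perm5(5))
  obtain r1 r2 where r: "G T a E = {{wa,r1},{wa,r2}}" "r1 \<noteq> r2" using cherry_form[OF cG(1) P(1)] by blast
  obtain s1 s2 where s: "G T b E = {{wb,s1},{wb,s2}}" "s1 \<noteq> s2" using bac.cherry_form[OF cG(2) P(2)] by blast
  obtain t1 t2 where t: "G T c E = {{wc,t1},{wc,t2}}" "t1 \<noteq> t2" using cab.cherry_form[OF cG(3) P(3)] by blast
  have "wc = r1 \<or> wc = r2"
    by (rule cherry[OF d(2) r(2) t(2)]; rule acb.cross; simp add: r(1) t(1))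
  moreover have "wb = r1 \<or> wb = r2"
    by (rule cherry[OF d(1) r(2) s(2)]; rule cross; simp add: r(1) s(1))
  ultimately have "{r1,r2} = {wb,wc}" using d r(2) by auto
  then show ?thesis using r(1) by (auto simp: doubleton_eq_iff)
qed

lemma shape: "\<exists>wa wb wc. wa \<notin> E \<and> wb \<notin> E \<and> wc \<notin> E \<and> wa \<noteq> wb \<and> wa \<noteq> wc \<and> wb \<noteq> wc \<and>
   T = {{a,b,c},{a,b,wc},{c,wc,wb},{c,wc,wa},{a,wb,wa},{b,wb,wa},{a,c,wb},{b,wc,wb},{a,wc,wa},{b,c,wa}}"
proof -
  interpret acb: fe5 T E a c b by (rule perm5(3))
  interpret bac: fe5 T E b a c by (rule perm5(1))
  interpret cab: fe5 T E c a b by (rule perm5(5))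
  have "a \<in> \<Union>T" "b \<in> \<Union>T" "c \<in> \<Union>T" using aE bE cE EinT by blast+
  then have bg: "5 \<le> card (M T a)" "5 \<le> card (M T b)" "5 \<le> card (M T c)" using big by blast+
  have ineq: "card (M T a) \<le> card (G T b E) + card (G T c E) + card (P T a E)"
     "card (M T b) \<le> card (G T a E) + card (G T c E) + card (P T b E)"
     "card (M T c) \<le> card (G T a E) + card (G T b E) + card (P T c E)"
    by (rule M_a, rule bac.M_a, rule cab.M_a)
  have pb: "card (P T a E) + card (G T a E) \<le> 3" "card (P T b E) + card (G T b E) \<le> 3"
     "card (P T c E) + card (G T c E) \<le> 3" by (rule Pb, rule bac.Pb, rule cab.Pb)
  have gl: "card (G T a E) \<le> 2" "card (G T b E) \<le> 2" "card (G T c E) \<le> 2"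
    by (rule G_le2, rule bac.G_le2, rule cab.G_le2)
  have cG: "card (G T a E) = 2" "card (G T b E) = 2" "card (G T c E) = 2"
    and cP: "card (P T a E) = 1" "card (P T b E) = 1" "card (P T c E) = 1"
    using bg ineq pb gl by linarith+
  obtain wa where wa: "P T a E = {wa}" using cP(1) by (auto simp: card_1_singleton_iff)
  obtain wb where wb: "P T b E = {wb}" using cP(2) by (auto simp: card_1_singleton_iff)
  obtain wc where wc: "P T c E = {wc}" using cP(3) by (auto simp: card_1_singleton_iff)
  have ca: "\<forall>e\<in>G T a E. wa \<in> e" using Pin[of wa] wa by simp
  have cb: "\<forall>e\<in>G T b E. wb \<in> e" using bac.Pin[of wb] wb by simp
  have cc: "\<forall>e\<in>G T c E. wc \<in> e" using cab.Pin[of wc] wc by simp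
  have dac: "wa \<noteq> wc"
  proof
    assume "wa = wc"
    then show False using same_center[OF wa _ ca _ cG(2) cP(2)] wc cc by simp
  qed
  have dab: "wa \<noteq> wb"
  proof
    assume "wa = wb"
    then show False using acb.same_center[OF wa _ ca _ cG(3) cP(3)] wb cb by simp
  qed
  have dbc: "wb \<noteq> wc"
  proof
    assume "wb = wc"
    then show False using bac.same_center[OF wb _ cb _ cG(1) cP(1)] wc cc by simp
  qed
  have Ga: "G T a E = {{wa,wb},{wa,wc}}" by (rule leaves[OF wa wb wc dab dac dbc cG])
  have Gb: "G T b E = {{wb,wa},{wb,wc}}" by (rule bac.leaves[OF wb wa wc dab[symmetric] dbc dac cG(2,1,3)])
  have Gc: "G T c E = {{wc,wa},{wc,wb}}" by (rule cab.leaves[OF wc wa wb dac[symmetric] dbc[symmetric] dab cG(3,1,2)])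
  have nE: "wa \<notin> E" "wb \<notin> E" "wc \<notin> E" using PE[of wa a] PE[of wb b] PE[of wc c] wa wb wc by auto
  have eqs: "insert a {wa,wb} = {a,wb,wa}" "insert a {wa,wc} = {a,wc,wa}" "insert b {wb,wa} = {b,wb,wa}"
    "insert b {wb,wc} = {b,wc,wb}" "insert c {wc,wa} = {c,wc,wa}" "insert c {wc,wb} = {c,wc,wb}"
    "{wa,b,c} = {b,c,wa}" "{wb,a,c} = {a,c,wb}" "{wc,a,b} = {a,b,wc}" by blast+
  have eqs2: "insert wa (E - {a}) = {b,c,wa}" "insert wb (E - {b}) = {a,c,wb}" "insert wc (E - {c}) = {a,b,wc}"
    using Ea Eb Ec by blast+
  define S where "S = {{a,b,c},{a,b,wc},{c,wc,wb},{c,wc,wa},{a,wb,wa},{b,wb,wa},{a,c,wb},{b,wc,wb},{a,wc,wa},{b,c,wa}}"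
  have "T \<subseteq> S"
  proof
    fix F assume F: "F \<in> T"
    from decomp[OF F] show "F \<in> S"
    proof (elim disjE bexE)
      assume "F = E" then show ?thesis unfolding S_def using Eabc by simp
    next
      fix e assume "e \<in> G T a E" "F = insert a e"
      then have "F = {a,wb,wa} \<or> F = {a,wc,wa}" using Ga eqs(1,2) by blast
      then show ?thesis by (elim disjE) (simp add: S_def)+
    next
      fix e assume "e \<in> G T b E" "F = insert b e"
      then have "F = {b,wb,wa} \<or> F = {b,wc,wb}" using Gb eqs(3,4) by blast
      then show ?thesis by (elim disjE) (simp add: S_def)+
    next
      fix e assume "e \<in> G T c E" "F = insert c e"
      then have "F = {c,wc,wa} \<or> F = {c,wc,wb}" using Gc eqs(5,6) by blast
      then show ?thesis by (elim disjE) (simp add: S_def)+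
    next
      fix w assume "w \<in> P T a E" "F = {w,b,c}"
      then have "F = {b,c,wa}" using wa eqs(7) by simp
      then show ?thesis by (simp add: S_def)
    next
      fix w assume "w \<in> P T b E" "F = {w,a,c}"
      then have "F = {a,c,wb}" using wb eqs(8) by simp
      then show ?thesis by (simp add: S_def)
    next
      fix w assume "w \<in> P T c E" "F = {w,a,b}"
      then have "F = {a,b,wc}" using wc eqs(9) by simp
      then show ?thesis by (simp add: S_def)
    qed
  qed
  moreover have "S \<subseteq> T"
  proof -
    have 1: "{a,wb,wa} \<in> T" "{a,wc,wa} \<in> T"
      unfolding eqs(1)[symmetric] eqs(2)[symmetric] using GT[of "{wa,wb}" a] GT[of "{wa,wc}" a] Ga by simp_all
    have 2: "{b,wb,wa} \<in> T" "{b,wc,wb} \<in> T"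
      unfolding eqs(4)[symmetric] using GT[of "{wb,wa}" b] GT[of "{wb,wc}" b] Gb by simp_all
    have 3: "{c,wc,wa} \<in> T" "{c,wc,wb} \<in> T"
      using GT[of "{wc,wa}" c] GT[of "{wc,wb}" c] Gc by simp_all
    have 4: "{b,c,wa} \<in> T" "{a,c,wb} \<in> T" "{a,b,wc} \<in> T"
      unfolding eqs2[symmetric] using PT[of wa a] PT[of wb b] PT[of wc c] wa wb wc by simp_all
    have 0: "{a,b,c} \<in> T" using EinT Eabc by simp
    show ?thesis unfolding S_def using 0 1 2 3 4 by simp
  qed
  ultimately have "T = S" by blast
  then show ?thesis unfolding S_def using nE dab dac dbc by blast
qed

end

lemma T0_cards: "\<forall>i\<in>{1..6}. card {B\<in>T0. (i::nat)\<notin>B} = 5" unfolding T0_def by code_simp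
lemma T0_card: "card T0 = 10" unfolding T0_def by code_simp
lemma T0_U: "\<Union>T0 = {1..6}" unfolding T0_def by code_simp

lemma iso_props: assumes "isomorphic T0 (T::nat set set)"
  shows "\<forall>v. 5 \<le> card {A\<in>T. v\<notin>A}" "\<exists>v\<in>\<Union>T. card {A\<in>T. v\<notin>A} = 5"
proof -
  obtain f where f: "inj_on f {1..6}" "T = (\<lambda>A. f ` A) ` T0" using assms T0_U unfolding isomorphic_def by auto
  have sub: "\<And>B. B \<in> T0 \<Longrightarrow> B \<subseteq> {1..6}" using T0_U by blast
  have injT: "inj_on (\<lambda>A. f ` A) T0"
    by (rule inj_on_subset[OF inj_on_image_Pow[OF f(1)]]) (use sub in blast)
  have cv: "card {A\<in>T. v\<notin>A} = card {B\<in>T0. v \<notin> f ` B}" for v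
  proof -
    have "{A\<in>T. v\<notin>A} = (\<lambda>A. f ` A) ` {B\<in>T0. v \<notin> f ` B}" using f(2) by blast
    moreover have "inj_on (\<lambda>A. f ` A) {B\<in>T0. v \<notin> f ` B}" using injT inj_on_subset by fastforce
    ultimately show ?thesis by (simp add: card_image)
  qed
  have c5: "card {A\<in>T. f i\<notin>A} = 5" if i: "i \<in> {1..6}" for i
  proof -
    have "{B\<in>T0. f i \<notin> f ` B} = {B\<in>T0. i \<notin> B}"
    proof (intro Collect_cong conj_cong refl)
      fix B assume "B \<in> T0"
      then have "B \<subseteq> {1..6}" by (rule sub)
      then show "(f i \<notin> f ` B) = (i \<notin> B)" using inj_on_image_mem_iff[OF f(1) i] by blast
    qed
    then show ?thesis using cv T0_cards i by simp
  qed
  show "\<forall>v. 5 \<le> card {A\<in>T. v\<notin>A}"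
  proof
    fix v
    show "5 \<le> card {A\<in>T. v\<notin>A}"
    proof (cases "v \<in> f ` {1..6}")
      case True then show ?thesis using c5 by auto
    next
      case False
      then have "{B\<in>T0. v \<notin> f ` B} = T0" using sub by blast
      then show ?thesis using cv T0_card by simp
    qed
  qed
  have "{1::nat,2,3} \<in> T0" unfolding T0_def by simp
  then have "f 1 \<in> \<Union>T" using f(2) by blast
  then show "\<exists>v\<in>\<Union>T. card {A\<in>T. v\<notin>A} = 5" using c5[of 1] by auto
qed

lemma shape_iso: assumes "distinct [a,b,c,wa,wb,wc::nat]"
  and T: "T = {{a,b,c},{a,b,wc},{c,wc,wb},{c,wc,wa},{a,wb,wa},{b,wb,wa},{a,c,wb},{b,wc,wb},{a,wc,wa},{b,c,wa}}"
  shows "isomorphic T0 T"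
proof -
  define f :: "nat \<Rightarrow> nat" where "f i = (if i = 1 then a else if i = 2 then b else if i = 3 then c
     else if i = 4 then wc else if i = 5 then wb else wa)" for i
  have fv: "f (Suc 0) = a" "f 2 = b" "f 3 = c" "f 4 = wc" "f 5 = wb" "f 6 = wa" by (simp_all add: f_def)
  have inj: "inj_on f {1..6}"
  proof -
    have e: "{1..6::nat} = {1,2,3,4,5,6}" by auto
    show ?thesis unfolding e using assms(1) by (auto simp: fv)
  qed
  have "(\<lambda>A. f ` A) ` T0 = T" unfolding T T0_def by (simp add: fv)
  then show ?thesis unfolding isomorphic_def T0_U using inj by blast
qed


lemma tau_cover: assumes "tau (T::nat set set) = 3" shows "\<exists>A\<in>T. x \<notin> A \<and> y \<notin> A"
proof (rule ccontr)
  assume "\<not> (\<exists>A\<in>T. x \<notin> A \<and> y \<notin> A)"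
  then have h: "\<exists>S. finite S \<and> card S = card {x,y} \<and> (\<forall>A\<in>T. S \<inter> A \<noteq> {})" by (intro exI[of _ "{x,y}"]) auto
  have "tau T \<le> card {x,y}" unfolding tau_def
    by (rule Least_le[of "\<lambda>k. \<exists>S. finite S \<and> card S = k \<and> (\<forall>A\<in>T. S \<inter> A \<noteq> {})", OF h])
  also have "\<dots> \<le> 2" by (simp add: card_insert_if)
  finally show False using assms by simp
qed

theorem corollary3p3:
  fixes n :: nat and T :: "nat set set"
  assumes "T \<subseteq> {A. A \<subseteq> {1..n} \<and> card A = 3}"
    and "intersecting T"
    and "tau T = 3"
  shows "gamma1 n T \<le> 5 \<and> (gamma1 n T = 5 \<longleftrightarrow> isomorphic T0 T)"
proof -
  have "T \<subseteq> Pow {1..n}" using assms(1) by blast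
  then have finT: "finite T" by (rule finite_subset) simp
  have c3: "\<forall>A\<in>T. card A = 3" using assms(1) by blast
  have it: "\<forall>A\<in>T. \<forall>B\<in>T. A \<inter> B \<noteq> {}" using assms(2) unfolding intersecting_def .
  have cv: "\<forall>x y. \<exists>A\<in>T. x \<notin> A \<and> y \<notin> A" using tau_cover[OF assms(3)] by blast
  have famT: "fam T" unfolding fam_def using finT c3 it cv by blast
  have U: "\<Union>T \<subseteq> {1..n}" using assms(1) by blast
  define m where "m v = card {A\<in>T. v\<notin>A}" for v
  have g: "gamma1 n T = Min (m ` {1..n})" unfolding gamma1_def m_def by simp
  have minle: "gamma1 n T \<le> m v" if vT: "v \<in> \<Union>T" for v
  proof -
    have "v \<in> {1..n}" using vT U by blast
    then show ?thesis unfolding g by (intro Min_le) auto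
  qed
  have iso5: "gamma1 n T = 5" if iso: "isomorphic T0 T"
  proof -
    obtain v where v: "v \<in> \<Union>T" "m v = 5" using iso_props(2)[OF iso] unfolding m_def by blast
    have ne: "{1..n} \<noteq> {}" using v(1) U by blast
    have all5: "\<forall>x\<in>m ` {1..n}. 5 \<le> x" using iso_props(1)[OF iso] unfolding m_def by blast
    have "5 \<le> gamma1 n T" unfolding g using ne all5 by (subst Min_ge_iff) auto
    moreover have "gamma1 n T \<le> 5" using minle[OF v(1)] v(2) by simp
    ultimately show ?thesis by simp
  qed
  show ?thesis
  proof (cases "\<forall>v\<in>\<Union>T. 5 \<le> m v")
    case True
    obtain E where E: "E \<in> T" using cv by blast
    have "card E = 3" using c3 E by blast
    then obtain a b c where abc: "E = {a,b,c}" "a \<noteq> b" "b \<noteq> c" "a \<noteq> c" using card_3_iff by metis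
    have fe: "fe T E a b c" by (rule fe.intro[OF famT E abc(1,2,4,3)])
    have "fe5_axioms T" unfolding fe5_axioms_def M_def using True unfolding m_def by blast
    then have fe5: "fe5 T E a b c" by (rule fe5.intro[OF fe])
    obtain wa wb wc where w: "wa \<notin> E" "wb \<notin> E" "wc \<notin> E" "wa \<noteq> wb" "wa \<noteq> wc" "wb \<noteq> wc"
      "T = {{a,b,c},{a,b,wc},{c,wc,wb},{c,wc,wa},{a,wb,wa},{b,wb,wa},{a,c,wb},{b,wc,wb},{a,wc,wa},{b,c,wa}}"
      using fe5.shape[OF fe5] by blast
    have "distinct [a,b,c,wa,wb,wc]" using w(1-6) abc by auto
    then have iso: "isomorphic T0 T" by (rule shape_iso[OF _ w(7)])
    then show ?thesis using iso5[OF iso] by simp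
  next
    case False
    then obtain v where v: "v \<in> \<Union>T" "m v < 5" by (meson not_le)
    then have "gamma1 n T < 5" using minle[OF v(1)] by simp
    moreover have "\<not> isomorphic T0 T"
    proof
      assume iso: "isomorphic T0 T"
      have "5 \<le> m v" using iso_props(1)[OF iso] unfolding m_def by blast
      then show False using v(2) by simp
    qed
    ultimately show ?thesis by simp
  qed
qed

end
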